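(* Let $L$ be a finite lattice, $C$ a nonempty convex subset of $L$, and $L[C]$ the doubling. For $a\in I_L(C)$, the element $(a,0)\in L[C]$ is left modular in $L[C]$ if and only if $a$ is left modular in $L$ and $a$ is below every maximal element of $C$. For $a\in (L\setminus I_L(C))\cup C$, the element $(a,1)\in L[C]$ is left modular in $L[C]$ if and only if $a$ is left modular in $L$ and $a$ is above every minimal element of $C$. Consequently, for $a\in C$, both $(a,0)$ and $(a,1)$ are left modular in $L[C]$ if and only if $a$ is left modular in $L$ and $a\in H(C)$.
   Context: A subset $C$ is convex if $x,y\in C$ implies $[x,y]\subseteq C$. $I_L(C)=\{y\in L\mid\exists x\in C,\ y\le x\}$. The doubling $L[C]$ is the subposet of $L\times\{0<1\}$ (product order) on $\big(I_L(C)\times\{0\}\big)\sqcup\big(((L\setminus I_L(C))\cup C)\times\{1\}\big)$; it is a lattice. The heart $H(C)$ is the set of elements of $C$ below all maximal elements of $C$ and above all minimal elements of $C$. An element $a$ of a lattice is left modular if for all $b<c$ one has $(b\vee a)\wedge c=b\vee(a\wedge c)$. *)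

theory Defs
  imports Main "HOL-Library.Product_Order"
begin

definition order_convex :: "'a::order set \<Rightarrow> bool" where
  "order_convex C \<longleftrightarrow> (\<forall>x\<in>C. \<forall>y\<in>C. {x..y} \<subseteq> C)"

definition down_closure :: "'a::order set \<Rightarrow> 'a set" where
  "down_closure C = {y. \<exists>x\<in>C. y \<le> x}"

text \<open>The doubling L[C] as a subset of L x {0<1} (False < True), with the product order.\<close>
definition doubling :: "'a::order set \<Rightarrow> ('a \<times> bool) set" where
  "doubling C = (down_closure C \<times> {False}) \<union> ((- down_closure C \<union> C) \<times> {True})"

definition maximals :: "'a::order set \<Rightarrow> 'a set" where
  "maximals C = {m\<in>C. \<forall>x\<in>C. m \<le> x \<longrightarrow> x = m}"

definition minimals :: "'a::order set \<Rightarrow> 'a set" where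
  "minimals C = {m\<in>C. \<forall>x\<in>C. x \<le> m \<longrightarrow> x = m}"

definition heart :: "'a::order set \<Rightarrow> 'a set" where
  "heart C = {x\<in>C. (\<forall>m\<in>maximals C. x \<le> m) \<and> (\<forall>m\<in>minimals C. m \<le> x)}"

definition left_modular :: "'a::lattice \<Rightarrow> bool" where
  "left_modular a \<longleftrightarrow> (\<forall>b c. b < c \<longrightarrow> inf (sup b a) c = sup b (inf a c))"

definition psup :: "'b::order set \<Rightarrow> 'b \<Rightarrow> 'b \<Rightarrow> 'b" where
  "psup P x y = (THE z. z \<in> P \<and> x \<le> z \<and> y \<le> z \<and> (\<forall>w\<in>P. x \<le> w \<and> y \<le> w \<longrightarrow> z \<le> w))"

definition pinf :: "'b::order set \<Rightarrow> 'b \<Rightarrow> 'b \<Rightarrow> 'b" where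
  "pinf P x y = (THE z. z \<in> P \<and> z \<le> x \<and> z \<le> y \<and> (\<forall>w\<in>P. w \<le> x \<and> w \<le> y \<longrightarrow> w \<le> z))"

definition left_modular_in :: "'b::order set \<Rightarrow> 'b \<Rightarrow> bool" where
  "left_modular_in P a \<longleftrightarrow>
     (\<forall>b\<in>P. \<forall>c\<in>P. b < c \<longrightarrow> pinf P (psup P b a) c = psup P b (pinf P a c))"

end

theory Submission
  imports Defs
begin

lemma D_mono: "y \<le> x \<Longrightarrow> x \<in> down_closure C \<Longrightarrow> y \<in> down_closure C"
  unfolding down_closure_def by (auto intro: order_trans)

lemma C_D: "x \<in> C \<Longrightarrow> x \<in> down_closure C"
  unfolding down_closure_def by auto

lemma conv_up: "order_convex C \<Longrightarrow> x \<in> C \<Longrightarrow> x \<le> y \<Longrightarrow> y \<in> down_closure C \<Longrightarrow> y \<in> C"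
  unfolding order_convex_def down_closure_def by fastforce

lemma inP: "(x, False) \<in> doubling C \<longleftrightarrow> x \<in> down_closure C"
  "(x, True) \<in> doubling C \<longleftrightarrow> x \<notin> down_closure C \<or> x \<in> C"
  unfolding doubling_def by auto

lemma psup_eq:
  fixes P :: "'b::order set"
  assumes "z \<in> P" "x \<le> z" "y \<le> z" "\<And>w. w \<in> P \<Longrightarrow> x \<le> w \<Longrightarrow> y \<le> w \<Longrightarrow> z \<le> w"
  shows "psup P x y = z"
  unfolding psup_def
  by (rule the_equality) (use assms in \<open>auto intro: antisym\<close>)

lemma pinf_eq:
  fixes P :: "'b::order set"
  assumes "z \<in> P" "z \<le> x" "z \<le> y" "\<And>w. w \<in> P \<Longrightarrow> w \<le> x \<Longrightarrow> w \<le> y \<Longrightarrow> w \<le> z"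
  shows "pinf P x y = z"
  unfolding pinf_def
  by (rule the_equality) (use assms in \<open>auto intro: antisym\<close>)

lemma jn_in:
  fixes C :: "'a::lattice set"
  assumes conv: "order_convex C" and p: "(x,i) \<in> doubling C" and q: "(y,j) \<in> doubling C"
  shows "(sup x y, i \<or> j \<or> sup x y \<notin> down_closure C) \<in> doubling C"
  proof (cases "i \<or> j \<or> sup x y \<notin> down_closure C")
  case True
  have "sup x y \<notin> down_closure C \<or> sup x y \<in> C"
  proof (cases "sup x y \<in> down_closure C")
    case True
    then have "x \<in> down_closure C" "y \<in> down_closure C" using D_mono[OF sup_ge1 True] D_mono[OF sup_ge2 True] by auto
    moreover have "i \<or> j" using \<open>i \<or> j \<or> sup x y \<notin> down_closure C\<close> True by auto
    ultimately have "x \<in> C \<or> y \<in> C" using p q by (cases i; cases j; auto simp: inP)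
    then show ?thesis using conv_up[OF conv] True by auto
  qed auto
  then show ?thesis using True by (simp add: inP)
next
  case False
  then show ?thesis by (simp add: inP)
qed

lemma jn:
  fixes C :: "'a::lattice set"
  assumes conv: "order_convex C" and p: "(x,i) \<in> doubling C" and q: "(y,j) \<in> doubling C"
  shows "psup (doubling C) (x,i) (y,j) = (sup x y, i \<or> j \<or> sup x y \<notin> down_closure C)"
proof (rule psup_eq)
  show "(sup x y, i \<or> j \<or> sup x y \<notin> down_closure C) \<in> doubling C"
  proof (cases "i \<or> j \<or> sup x y \<notin> down_closure C")
    case True
    have "sup x y \<notin> down_closure C \<or> sup x y \<in> C"
    proof (cases "sup x y \<in> down_closure C")
      case True
      then have "x \<in> down_closure C" "y \<in> down_closure C" using D_mono[OF sup_ge1 True] D_mono[OF sup_ge2 True] by auto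
      moreover have "i \<or> j" using \<open>i \<or> j \<or> sup x y \<notin> down_closure C\<close> True by auto
      ultimately have "x \<in> C \<or> y \<in> C" using p q by (cases i; cases j; auto simp: inP)
      then show ?thesis using conv_up[OF conv] True by auto
    qed auto
    then show ?thesis using True by (simp add: inP)
  next
    case False
    then show ?thesis by (simp add: inP)
  qed
  show "(x, i) \<le> (sup x y, i \<or> j \<or> sup x y \<notin> down_closure C)" by (auto simp: less_eq_prod_def)
  show "(y, j) \<le> (sup x y, i \<or> j \<or> sup x y \<notin> down_closure C)" by (auto simp: less_eq_prod_def)
  fix w assume w: "w \<in> doubling C" "(x, i) \<le> w" "(y, j) \<le> w"
  obtain w1 k where wk: "w = (w1,k)" by (cases w)
  have "sup x y \<le> w1" using w wk by (auto simp: less_eq_prod_def)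
  moreover have "sup x y \<notin> down_closure C \<Longrightarrow> k"
    using w wk \<open>sup x y \<le> w1\<close> D_mono[of "sup x y" w1 C] by (cases k) (auto simp: inP)
  ultimately show "(sup x y, i \<or> j \<or> sup x y \<notin> down_closure C) \<le> w"
    using w wk by (auto simp: less_eq_prod_def)
qed

lemma mt_in:
  fixes C :: "'a::lattice set"
  assumes conv: "order_convex C" and p: "(x,i) \<in> doubling C" and q: "(y,j) \<in> doubling C"
  shows "(inf x y, i \<and> j \<and> (inf x y \<notin> down_closure C \<or> inf x y \<in> C)) \<in> doubling C"
  proof (cases "i \<and> j \<and> (inf x y \<notin> down_closure C \<or> inf x y \<in> C)")
  case True
  then show ?thesis by (auto simp: inP)
next
  case False
  have "inf x y \<in> down_closure C"
  proof (cases "i \<and> j")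
    case True
    then show ?thesis using False by auto
  next
    case False
    then have "x \<in> down_closure C \<or> y \<in> down_closure C" using p q by (cases i; cases j; auto simp: inP)
    then show ?thesis using D_mono[of "inf x y" x C] D_mono[of "inf x y" y C] by auto
  qed
  moreover have "(i \<and> j \<and> (inf x y \<notin> down_closure C \<or> inf x y \<in> C)) = False" using False by simp
  ultimately show ?thesis by (simp only: inP)
qed

lemma mt:
  fixes C :: "'a::lattice set"
  assumes conv: "order_convex C" and p: "(x,i) \<in> doubling C" and q: "(y,j) \<in> doubling C"
  shows "pinf (doubling C) (x,i) (y,j) = (inf x y, i \<and> j \<and> (inf x y \<notin> down_closure C \<or> inf x y \<in> C))"
proof (rule pinf_eq)
  show "(inf x y, i \<and> j \<and> (inf x y \<notin> down_closure C \<or> inf x y \<in> C)) \<in> doubling C"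
  proof (cases "i \<and> j \<and> (inf x y \<notin> down_closure C \<or> inf x y \<in> C)")
    case True
    then show ?thesis by (auto simp: inP)
  next
    case False
    have "inf x y \<in> down_closure C"
    proof (cases "i \<and> j")
      case True
      then show ?thesis using False by auto
    next
      case False
      then have "x \<in> down_closure C \<or> y \<in> down_closure C" using p q by (cases i; cases j; auto simp: inP)
      then show ?thesis using D_mono[of "inf x y" x C] D_mono[of "inf x y" y C] by auto
    qed
    moreover have "(i \<and> j \<and> (inf x y \<notin> down_closure C \<or> inf x y \<in> C)) = False" using False by simp
    ultimately show ?thesis by (simp only: inP)
  qed
  show "(inf x y, i \<and> j \<and> (inf x y \<notin> down_closure C \<or> inf x y \<in> C)) \<le> (x, i)" by (auto simp: less_eq_prod_def)
  show "(inf x y, i \<and> j \<and> (inf x y \<notin> down_closure C \<or> inf x y \<in> C)) \<le> (y, j)" by (auto simp: less_eq_prod_def)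
  fix w assume w: "w \<in> doubling C" "w \<le> (x, i)" "w \<le> (y, j)"
  obtain w1 k where wk: "w = (w1,k)" by (cases w)
  have le: "w1 \<le> inf x y" using w wk by (auto simp: less_eq_prod_def)
  moreover have "k \<Longrightarrow> inf x y \<notin> down_closure C \<or> inf x y \<in> C"
  proof -
    assume k
    then have "w1 \<notin> down_closure C \<or> w1 \<in> C" using w wk by (simp add: inP)
    then show ?thesis using le D_mono[of w1 "inf x y" C] conv_up[OF conv, of w1 "inf x y"] by auto
  qed
  ultimately show "w \<le> (inf x y, i \<and> j \<and> (inf x y \<notin> down_closure C \<or> inf x y \<in> C))"
    using w wk by (auto simp: less_eq_prod_def)
qed


lemma exp0:
  fixes C :: "'a::lattice set"
  assumes conv: "order_convex C" and a: "a \<in> down_closure C"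
    and p: "(b,i) \<in> doubling C" and q: "(c,j) \<in> doubling C"
  shows "pinf (doubling C) (psup (doubling C) (b,i) (a,False)) (c,j) =
           (inf (sup b a) c, (i \<or> sup b a \<notin> down_closure C) \<and> j \<and>
              (inf (sup b a) c \<notin> down_closure C \<or> inf (sup b a) c \<in> C))"
    and "psup (doubling C) (b,i) (pinf (doubling C) (a,False) (c,j)) =
           (sup b (inf a c), i \<or> sup b (inf a c) \<notin> down_closure C)"
proof -
  have aP: "(a,False) \<in> doubling C" using a by (simp add: inP)
  have 1: "psup (doubling C) (b,i) (a,False) = (sup b a, i \<or> sup b a \<notin> down_closure C)"
    using jn[OF conv p aP] by simp
  have 2: "(sup b a, i \<or> sup b a \<notin> down_closure C) \<in> doubling C"
    using jn_in[OF conv p aP] by simp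
  show "pinf (doubling C) (psup (doubling C) (b,i) (a,False)) (c,j) =
           (inf (sup b a) c, (i \<or> sup b a \<notin> down_closure C) \<and> j \<and>
              (inf (sup b a) c \<notin> down_closure C \<or> inf (sup b a) c \<in> C))"
    unfolding 1 mt[OF conv 2 q] by simp
  have 3: "pinf (doubling C) (a,False) (c,j) = (inf a c, False)"
    using mt[OF conv aP q] by simp
  have 4: "(inf a c, False) \<in> doubling C" using D_mono[OF inf_le1 a] by (simp add: inP)
  show "psup (doubling C) (b,i) (pinf (doubling C) (a,False) (c,j)) =
           (sup b (inf a c), i \<or> sup b (inf a c) \<notin> down_closure C)"
    unfolding 3 jn[OF conv p 4] by simp
qed

lemma exp1:
  fixes C :: "'a::lattice set"
  assumes conv: "order_convex C" and aP: "(a,True) \<in> doubling C"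
    and p: "(b,i) \<in> doubling C" and q: "(c,j) \<in> doubling C"
  shows "pinf (doubling C) (psup (doubling C) (b,i) (a,True)) (c,j) =
           (inf (sup b a) c, j \<and> (inf (sup b a) c \<notin> down_closure C \<or> inf (sup b a) c \<in> C))"
    and "psup (doubling C) (b,i) (pinf (doubling C) (a,True) (c,j)) =
           (sup b (inf a c), i \<or> (j \<and> (inf a c \<notin> down_closure C \<or> inf a c \<in> C))
              \<or> sup b (inf a c) \<notin> down_closure C)"
proof -
  have 1: "psup (doubling C) (b,i) (a,True) = (sup b a, True)"
    using jn[OF conv p aP] by simp
  have 2: "(sup b a, True) \<in> doubling C"
    using jn_in[OF conv p aP] by simp
  show "pinf (doubling C) (psup (doubling C) (b,i) (a,True)) (c,j) =
           (inf (sup b a) c, j \<and> (inf (sup b a) c \<notin> down_closure C \<or> inf (sup b a) c \<in> C))"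
    unfolding 1 mt[OF conv 2 q] by simp
  have 3: "pinf (doubling C) (a,True) (c,j) = (inf a c, j \<and> (inf a c \<notin> down_closure C \<or> inf a c \<in> C))"
    using mt[OF conv aP q] by simp
  have 4: "(inf a c, j \<and> (inf a c \<notin> down_closure C \<or> inf a c \<in> C)) \<in> doubling C"
    using mt_in[OF conv aP q] by simp
  show "psup (doubling C) (b,i) (pinf (doubling C) (a,True) (c,j)) =
           (sup b (inf a c), i \<or> (j \<and> (inf a c \<notin> down_closure C \<or> inf a c \<in> C))
              \<or> sup b (inf a c) \<notin> down_closure C)"
    unfolding 3 jn[OF conv p 4] by simp
qed

lemma lm_unfold:
  "left_modular_in P x \<longleftrightarrow> (\<forall>b i c j. (b,i) \<in> P \<longrightarrow> (c,j) \<in> P \<longrightarrow> (b,i) < (c,j) \<longrightarrow>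
     pinf P (psup P (b,i) x) (c,j) = psup P (b,i) (pinf P x (c,j)))"
  unfolding left_modular_in_def by auto

lemma lp_eq:
  fixes a b c :: "'a::lattice"
  assumes "left_modular a" "b \<le> c"
  shows "inf (sup b a) c = sup b (inf a c)"
proof (cases "b = c")
  case True
  then show ?thesis by (simp add: inf_absorb2 sup_absorb1)
next
  case False
  then show ?thesis using assms unfolding left_modular_def by auto
qed

lemma pair_less: "((b::'a::order), (i::bool)) < (c,j) \<Longrightarrow> b \<le> c \<and> (i \<longrightarrow> j)"
  by (auto simp: less_le_not_le less_eq_prod_def)


lemma canon:
  fixes C :: "'a::lattice set"
  assumes "b < c"
  shows "(b, b \<notin> down_closure C) \<in> doubling C" "(c, c \<notin> down_closure C) \<in> doubling C"
    "(b, b \<notin> down_closure C) < (c, c \<notin> down_closure C)"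
proof -
  show "(b, b \<notin> down_closure C) \<in> doubling C" by (cases "b \<in> down_closure C") (auto simp: inP)
  show "(c, c \<notin> down_closure C) \<in> doubling C" by (cases "c \<in> down_closure C") (auto simp: inP)
  have "c \<in> down_closure C \<Longrightarrow> b \<in> down_closure C" using D_mono assms less_imp_le by blast
  then show "(b, b \<notin> down_closure C) < (c, c \<notin> down_closure C)"
    using assms by (auto simp: less_le_not_le less_eq_prod_def)
qed

lemma part1:
  fixes C :: "'a::{finite,lattice} set"
  assumes conv: "order_convex C" and a: "a \<in> down_closure C"
  shows "left_modular_in (doubling C) (a, False) \<longleftrightarrow> left_modular a \<and> (\<forall>m\<in>maximals C. a \<le> m)"
proof
  assume H: "left_modular_in (doubling C) (a, False)"
  have eq: "(inf (sup b a) c, (i \<or> sup b a \<notin> down_closure C) \<and> j \<and>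
              (inf (sup b a) c \<notin> down_closure C \<or> inf (sup b a) c \<in> C)) =
            (sup b (inf a c), i \<or> sup b (inf a c) \<notin> down_closure C)"
    if "(b,i) \<in> doubling C" "(c,j) \<in> doubling C" "(b,i) < (c,j)" for b i c j
    using H[unfolded lm_unfold] that exp0[OF conv a that(1,2)] by metis
  have "left_modular a"
    unfolding left_modular_def
  proof (intro allI impI)
    fix b c :: 'a assume "b < c"
    from eq[OF canon[OF this]] show "inf (sup b a) c = sup b (inf a c)" by simp
  qed
  moreover have "a \<le> m" if m: "m \<in> maximals C" for m
  proof (rule ccontr)
    assume na: "\<not> a \<le> m"
    have mC: "m \<in> C" using m by (simp add: maximals_def)
    have P1: "(m,False) \<in> doubling C" "(m,True) \<in> doubling C" using C_D[OF mC] mC by (auto simp: inP)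
    have lt: "(m,False) < (m,True)" by (auto simp: less_le_not_le less_eq_prod_def)
    have "sup m a \<notin> down_closure C"
    proof
      assume "sup m a \<in> down_closure C"
      then have "sup m a \<in> C" using conv_up[OF conv mC sup_ge1] by blast
      then have "sup m a = m" using m by (auto simp: maximals_def)
      then show False using na by (metis sup.cobounded2)
    qed
    then show False using eq[OF P1 lt] mC C_D[OF mC] by (simp add: sup_absorb1 inf_absorb2)
  qed
  ultimately show "left_modular a \<and> (\<forall>m\<in>maximals C. a \<le> m)" by blast
next
  assume H: "left_modular a \<and> (\<forall>m\<in>maximals C. a \<le> m)"
  show "left_modular_in (doubling C) (a, False)"
    unfolding lm_unfold
  proof (intro allI impI)
    fix b i c j
    assume p: "(b,i) \<in> doubling C" and q: "(c,j) \<in> doubling C" and lt: "(b,i) < (c,j)"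
    have bc: "b \<le> c" and ij: "i \<longrightarrow> j" using pair_less[OF lt] by auto
    define u where "u = inf (sup b a) c"
    have u2: "u = sup b (inf a c)" using lp_eq[OF conjunct1[OF H] bc] u_def by simp
    have uc: "u \<le> c" "u \<le> sup b a" "b \<le> u" using u_def u2 bc by auto
    have "((i \<or> sup b a \<notin> down_closure C) \<and> j \<and> (u \<notin> down_closure C \<or> u \<in> C))
          = (i \<or> u \<notin> down_closure C)"
    proof (cases "u \<in> down_closure C")
      case False
      then have "c \<notin> down_closure C" "sup b a \<notin> down_closure C" using D_mono uc by blast+
      then have "j" using q by (cases j) (auto simp: inP)
      then show ?thesis using False \<open>sup b a \<notin> down_closure C\<close> by simp
    next
      case True
      have bD: "b \<in> down_closure C" using D_mono[OF uc(3) True] .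
      show ?thesis
      proof (cases i)
        case True
        then have "j" using ij by simp
        have "b \<in> C" using p True bD by (simp add: inP)
        then have "u \<in> C" using conv_up[OF conv _ uc(3) \<open>u \<in> down_closure C\<close>] by blast
        then show ?thesis using True \<open>j\<close> by simp
      next
        case False
        have "\<not> (sup b a \<notin> down_closure C \<and> j \<and> u \<in> C)"
        proof
          assume A: "sup b a \<notin> down_closure C \<and> j \<and> u \<in> C"
          obtain m where m: "m \<in> C" "u \<le> m" "\<forall>x\<in>C. m \<le> x \<longrightarrow> m = x"
            using finite_has_maximal2[of C u] A by auto
          have "m \<in> maximals C" using m by (auto simp: maximals_def)
          then have "a \<le> m" using H by blast
          moreover have "b \<le> m" using uc(3) m(2) by (rule order_trans)
          ultimately have "sup b a \<le> m" by simp
          then have "sup b a \<in> down_closure C" using m(1) by (auto simp: down_closure_def)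
          then show False using A by blast
        qed
        then show ?thesis using False True by auto
      qed
    qed
    then show "pinf (doubling C) (psup (doubling C) (b, i) (a, False)) (c, j) =
       psup (doubling C) (b, i) (pinf (doubling C) (a, False) (c, j))"
      unfolding exp0[OF conv a p q] using u_def u2 by simp
  qed
qed


lemma part2:
  fixes C :: "'a::{finite,lattice} set"
  assumes conv: "order_convex C" and a: "a \<in> (- down_closure C) \<union> C"
  shows "left_modular_in (doubling C) (a, True) \<longleftrightarrow> left_modular a \<and> (\<forall>m\<in>minimals C. m \<le> a)"
proof
  have aP: "(a,True) \<in> doubling C" using a by (auto simp: inP)
  assume H: "left_modular_in (doubling C) (a, True)"
  have eq: "(inf (sup b a) c, j \<and> (inf (sup b a) c \<notin> down_closure C \<or> inf (sup b a) c \<in> C)) =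
           (sup b (inf a c), i \<or> (j \<and> (inf a c \<notin> down_closure C \<or> inf a c \<in> C))
              \<or> sup b (inf a c) \<notin> down_closure C)"
    if "(b,i) \<in> doubling C" "(c,j) \<in> doubling C" "(b,i) < (c,j)" for b i c j
    using H[unfolded lm_unfold] that exp1[OF conv aP that(1,2)] by metis
  have "left_modular a"
    unfolding left_modular_def
  proof (intro allI impI)
    fix b c :: 'a assume "b < c"
    from eq[OF canon[OF this]] show "inf (sup b a) c = sup b (inf a c)" by simp
  qed
  moreover have "m \<le> a" if m: "m \<in> minimals C" for m
  proof (rule ccontr)
    assume na: "\<not> m \<le> a"
    have mC: "m \<in> C" using m by (simp add: minimals_def)
    have P1: "(m,False) \<in> doubling C" "(m,True) \<in> doubling C" using C_D[OF mC] mC by (auto simp: inP)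
    have lt: "(m,False) < (m,True)" by (auto simp: less_le_not_le less_eq_prod_def)
    have amD: "inf a m \<in> down_closure C" using D_mono[OF inf_le2 C_D[OF mC]] .
    have "inf a m \<notin> C"
    proof
      assume "inf a m \<in> C"
      then have "inf a m = m" using m by (auto simp: minimals_def)
      then show False using na by (metis inf.cobounded1)
    qed
    then show False using eq[OF P1 lt] mC C_D[OF mC] amD by (simp add: sup_absorb1 inf_absorb2)
  qed
  ultimately show "left_modular a \<and> (\<forall>m\<in>minimals C. m \<le> a)" by blast
next
  have aP: "(a,True) \<in> doubling C" using a by (auto simp: inP)
  assume H: "left_modular a \<and> (\<forall>m\<in>minimals C. m \<le> a)"
  show "left_modular_in (doubling C) (a, True)"
    unfolding lm_unfold
  proof (intro allI impI)
    fix b i c j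
    assume p: "(b,i) \<in> doubling C" and q: "(c,j) \<in> doubling C" and lt: "(b,i) < (c,j)"
    have bc: "b \<le> c" and ij: "i \<longrightarrow> j" using pair_less[OF lt] by auto
    define u where "u = inf (sup b a) c"
    have u2: "u = sup b (inf a c)" using lp_eq[OF conjunct1[OF H] bc] u_def by simp
    have uc: "u \<le> c" "u \<le> sup b a" "b \<le> u" "inf a c \<le> u" using u_def u2 bc by (auto simp: le_supI2)
    have "(j \<and> (u \<notin> down_closure C \<or> u \<in> C))
          = (i \<or> (j \<and> (inf a c \<notin> down_closure C \<or> inf a c \<in> C)) \<or> u \<notin> down_closure C)"
    proof (cases "u \<in> down_closure C")
      case False
      then have "c \<notin> down_closure C" using D_mono uc by blast
      then have "j" using q by (cases j) (auto simp: inP)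
      then show ?thesis using False by simp
    next
      case True
      have bD: "b \<in> down_closure C" using D_mono[OF uc(3) True] .
      have acD: "inf a c \<in> down_closure C" using D_mono[OF uc(4) True] .
      show ?thesis
      proof (cases "j \<and> u \<in> C")
        case True
        have "inf a c \<in> C"
        proof -
          obtain m where m: "m \<in> C" "m \<le> u" "\<forall>x\<in>C. x \<le> m \<longrightarrow> m = x"
            using finite_has_minimal2[of C u] True by auto
          have "m \<in> minimals C" using m by (auto simp: minimals_def)
          then have "m \<le> a" using H by blast
          moreover have "m \<le> c" using m(2) uc(1) by (rule order_trans)
          ultimately have "m \<le> inf a c" by simp
          then show ?thesis using conv_up[OF conv m(1) _ acD] by blast
        qed
        then show ?thesis using True by simp
      next
        case False
        have ni: "\<not> i"
        proof
          assume i
          then have "b \<in> C" using p bD by (simp add: inP)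
          then have "u \<in> C" using conv_up[OF conv _ uc(3) \<open>u \<in> down_closure C\<close>] by blast
          then show False using False ij \<open>i\<close> by simp
        qed
        have "j \<longrightarrow> inf a c \<notin> C"
        proof
          assume j
          then have "u \<notin> C" using False by simp
          then show "inf a c \<notin> C" using conv_up[OF conv _ uc(4) True] by blast
        qed
        then show ?thesis using False ni True acD by auto
      qed
    qed
    then show "pinf (doubling C) (psup (doubling C) (b, i) (a, True)) (c, j) =
       psup (doubling C) (b, i) (pinf (doubling C) (a, True) (c, j))"
      unfolding exp1[OF conv aP p q] using u_def u2 by simp
  qed
qed

theorem proposition3p16:
  fixes C :: "'a::{finite,lattice} set"
  assumes "C \<noteq> {}" and "order_convex C"
  shows "(\<forall>a\<in>down_closure C.
            left_modular_in (doubling C) (a, False) \<longleftrightarrow>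
            left_modular a \<and> (\<forall>m\<in>maximals C. a \<le> m))
       \<and> (\<forall>a\<in>(- down_closure C) \<union> C.
            left_modular_in (doubling C) (a, True) \<longleftrightarrow>
            left_modular a \<and> (\<forall>m\<in>minimals C. m \<le> a))
       \<and> (\<forall>a\<in>C.
            (left_modular_in (doubling C) (a, False) \<and> left_modular_in (doubling C) (a, True)) \<longleftrightarrow>
            left_modular a \<and> a \<in> heart C)"
proof (intro conjI ballI)
  fix a assume "a \<in> down_closure C"
  then show "left_modular_in (doubling C) (a, False) \<longleftrightarrow> left_modular a \<and> (\<forall>m\<in>maximals C. a \<le> m)"
    using part1[OF assms(2)] by blast
next
  fix a assume "a \<in> (- down_closure C) \<union> C"
  then show "left_modular_in (doubling C) (a, True) \<longleftrightarrow> left_modular a \<and> (\<forall>m\<in>minimals C. m \<le> a)"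
    using part2[OF assms(2)] by blast
next
  fix a assume aC: "a \<in> C"
  show "(left_modular_in (doubling C) (a, False) \<and> left_modular_in (doubling C) (a, True)) \<longleftrightarrow>
            left_modular a \<and> a \<in> heart C"
    using part1[OF assms(2) C_D[OF aC]] part2[OF assms(2), of a] aC
    unfolding heart_def by blast
qed

end
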